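(* Let $(\mathbf X_1,\mathbf Y_1)$ and $(\mathbf X_2,\mathbf Y_2)$ be general correlated sources, both uniformly integrable, and let $(\mathbf X,\mathbf Y)$ be their mixture $P_{X^nY^n}=\alpha_1P_{X_1^nY_1^n}+\alpha_2P_{X_2^nY_2^n}$ with $\alpha_1,\alpha_2>0$, $\alpha_1+\alpha_2=1$. Then \[\overline H_s(\mathbf X|\mathbf Y)\le\lim_{\varepsilon\downarrow0}\limsup_{n\to\infty}\frac1n\sum_{x^n\in\mathcal X^n}P_{X^n}(x^n)\Big[\max_{i=1,2}\overline h_i^\varepsilon(x^n)\Big].\]
   Context: A general correlated source $\{(X^n,Y^n)\}_{n\ge1}$ is an arbitrary sequence of pairs of random variables on $\mathcal X^n\times\mathcal Y^n$, $\mathcal X,\mathcal Y$ finite or countably infinite (no structural assumptions; marginal probabilities positive). Logs base 2. A source is uniformly integrable if $Z_n=\frac1n\log\frac1{P_{X^n|Y^n}(X^n|Y^n)}$ satisfies $\lim_{u\to\infty}\sup_n\sum_{z:|z|\ge u}P_{Z_n}(z)|z|=0$. For a source with distributions $P_{X^nY^n}$, $x^n$ and $\varepsilon\in(0,1]$: $\overline h^\varepsilon(x^n|P_{X^nY^n})=\inf\{a\in\mathbb R:\sum_{y^n:\log(1/P_{X^n|Y^n}(x^n|y^n))>a}P_{Y^n|X^n}(y^n|x^n)\le\varepsilon\}$; $\overline h_i^\varepsilon(x^n)=\overline h^\varepsilon(x^n|P_{X_i^nY_i^n})$; $\overline H_s^\varepsilon(X^n|Y^n)=\sum_{x^n}P_{X^n}(x^n)\overline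 h^\varepsilon(x^n|P_{X^nY^n})$; $\overline H_s(\mathbf X|\mathbf Y)=\lim_{\varepsilon\downarrow0}\limsup_n\frac1n\overline H_s^\varepsilon(X^n|Y^n)$. *)

theory Defs
  imports "HOL-Probability.Probability"
begin

type_synonym ('a, 'b) source = "nat \<Rightarrow> ('a list \<times> 'b list) pmf"

definition is_source :: "('a::countable, 'b::countable) source \<Rightarrow> bool" where
  "is_source P \<longleftrightarrow>
     (\<forall>n. set_pmf (P n) \<subseteq> {(x, y). length x = n \<and> length y = n}) \<and>
     (\<forall>n x. length x = n \<longrightarrow> pmf (map_pmf fst (P n)) x > 0) \<and>
     (\<forall>n y. length y = n \<longrightarrow> pmf (map_pmf snd (P n)) y > 0)"

definition pX :: "('a, 'b) source \<Rightarrow> nat \<Rightarrow> 'a list \<Rightarrow> real" where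
  "pX P n x = pmf (map_pmf fst (P n)) x"

definition pY :: "('a, 'b) source \<Rightarrow> nat \<Rightarrow> 'b list \<Rightarrow> real" where
  "pY P n y = pmf (map_pmf snd (P n)) y"

definition condXY :: "('a, 'b) source \<Rightarrow> nat \<Rightarrow> 'a list \<Rightarrow> 'b list \<Rightarrow> real" where
  "condXY P n x y = pmf (P n) (x, y) / pY P n y"

definition condYX :: "('a, 'b) source \<Rightarrow> nat \<Rightarrow> 'b list \<Rightarrow> 'a list \<Rightarrow> real" where
  "condYX P n y x = pmf (P n) (x, y) / pX P n x"

definition Zn :: "('a, 'b) source \<Rightarrow> nat \<Rightarrow> 'a list \<times> 'b list \<Rightarrow> real" where
  "Zn P n xy = (1 / real n) * log 2 (1 / condXY P n (fst xy) (snd xy))"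

definition unif_integrable :: "('a, 'b) source \<Rightarrow> bool" where
  "unif_integrable P \<longleftrightarrow>
     ((\<lambda>u::real. SUP n\<in>{1..}. \<integral>\<^sup>+ z. (if \<bar>z\<bar> \<ge> u then ennreal \<bar>z\<bar> else 0)
                                   \<partial>(measure_pmf (map_pmf (Zn P n) (P n))))
       \<longlongrightarrow> 0) at_top"

definition hbar :: "real \<Rightarrow> ('a, 'b) source \<Rightarrow> nat \<Rightarrow> 'a list \<Rightarrow> real" where
  "hbar \<epsilon> P n x = Inf {a::real.
      (\<Sum>\<^sub>\<infinity> y \<in> {y. log 2 (1 / condXY P n x y) > a}. condYX P n y x) \<le> \<epsilon>}"

definition Hs_eps :: "real \<Rightarrow> ('a, 'b) source \<Rightarrow> nat \<Rightarrow> ennreal" where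
  "Hs_eps \<epsilon> P n = (\<Sum>\<^sub>\<infinity> x. ennreal (pX P n x) * ennreal (hbar \<epsilon> P n x))"

definition Hs_bar :: "('a, 'b) source \<Rightarrow> ennreal" where
  "Hs_bar P = Lim (at_right 0) (\<lambda>\<epsilon>::real. limsup (\<lambda>n. Hs_eps \<epsilon> P n / of_nat n))"

definition Hmax_eps ::
  "real \<Rightarrow> ('a, 'b) source \<Rightarrow> ('a, 'b) source \<Rightarrow> ('a, 'b) source \<Rightarrow> nat \<Rightarrow> ennreal" where
  "Hmax_eps \<epsilon> P P1 P2 n =
     (\<Sum>\<^sub>\<infinity> x. ennreal (pX P n x) * ennreal (max (hbar \<epsilon> P1 n x) (hbar \<epsilon> P2 n x)))"

end

theory Submission
  imports Defs
begin

definition mx :: "('x \<times> 'y) pmf \<Rightarrow> 'x \<Rightarrow> real" where "mx r x = pmf (map_pmf fst r) x"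
definition my :: "('x \<times> 'y) pmf \<Rightarrow> 'y \<Rightarrow> real" where "my r y = pmf (map_pmf snd r) y"
definition Lf :: "('x \<times> 'y) pmf \<Rightarrow> 'x \<Rightarrow> 'y \<Rightarrow> real" where
  "Lf r x y = log 2 (1 / (pmf r (x,y) / pmf (map_pmf snd r) y))"
definition Jm :: "('x \<times> 'y) pmf \<Rightarrow> 'x \<Rightarrow> real \<Rightarrow> real" where
  "Jm r x a = measure r {z. fst z = x \<and> Lf r x (snd z) > a}"
definition hb :: "real \<Rightarrow> ('x \<times> 'y) pmf \<Rightarrow> 'x \<Rightarrow> real" where
  "hb \<epsilon> r x = Inf {a::real.
      (\<Sum>\<^sub>\<infinity> y \<in> {y. log 2 (1 / (pmf r (x,y) / pmf (map_pmf snd r) y)) > a}. pmf r (x,y) / pmf (map_pmf fst r) x) \<le> \<epsilon>}"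

lemma hbar_hb: "hbar \<epsilon> P n x = hb \<epsilon> (P n) x"
  by (simp add: hbar_def hb_def condYX_def condXY_def pX_def pY_def)

lemma Zn_Lf: "Zn P n z = (1 / real n) * Lf (P n) (fst z) (snd z)"
  by (simp add: Zn_def Lf_def condXY_def pY_def)

lemma mx_meas: "mx r x = measure r {z. fst z = x}"
  by (simp add: mx_def pmf_map vimage_def)
lemma my_meas: "my r y = measure r {z. snd z = y}"
  by (simp add: my_def pmf_map vimage_def)

lemma infsum_slice: "(\<Sum>\<^sub>\<infinity> y \<in> S. pmf r (x,y)) = measure r {z. fst z = x \<and> snd z \<in> S}"
proof -
  have "(\<Sum>\<^sub>\<infinity> y \<in> S. pmf r (x,y)) = infsum (pmf r) (Pair x ` S)"
    by (subst infsum_reindex) (auto simp: inj_on_def o_def)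
  also have "\<dots> = infsetsum (pmf r) (Pair x ` S)"
    by (rule infsetsum_infsum[symmetric]) auto
  also have "\<dots> = measure r (Pair x ` S)" by (simp add: measure_pmf_conv_infsetsum)
  also have "Pair x ` S = {z. fst z = x \<and> snd z \<in> S}" by force
  finally show ?thesis .
qed

lemma hb_Jm: "hb \<epsilon> r x = Inf {a. Jm r x a / mx r x \<le> \<epsilon>}"
proof -
  have "\<And>a. (\<Sum>\<^sub>\<infinity> y \<in> {y. Lf r x y > a}. pmf r (x,y) / pmf (map_pmf fst r) x) = Jm r x a / mx r x"
    by (simp add: divide_inverse infsum_cmult_left' infsum_slice Jm_def mx_def)
  then show ?thesis unfolding hb_def Lf_def[symmetric] by simp
qed

lemma Lf_nonneg: assumes "z \<in> set_pmf r" shows "Lf r (fst z) (snd z) \<ge> 0"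
proof -
  have p: "pmf r z > 0" using assms by (simp add: pmf_positive)
  have "pmf r z = measure r {z}" by (simp add: measure_pmf_single)
  also have "\<dots> \<le> measure r {w. snd w = snd z}" by (rule measure_pmf.finite_measure_mono) auto
  finally have le: "pmf r z \<le> pmf (map_pmf snd r) (snd z)" using my_meas[of r "snd z"] by (simp add: my_def)
  then have "1 \<le> 1 / (pmf r z / pmf (map_pmf snd r) (snd z))" using p by simp
  then show ?thesis unfolding Lf_def by simp
qed

lemma Jm_le_mx: "Jm r x a \<le> mx r x"
  unfolding Jm_def mx_meas by (rule measure_pmf.finite_measure_mono) auto

lemma Jm_nonneg: "Jm r x a \<ge> 0" by (simp add: Jm_def)

lemma Jm_neg: assumes "a < 0" shows "Jm r x a = mx r x"
proof -
  have "{z. fst z = x} \<inter> set_pmf r \<subseteq> {z. fst z = x \<and> Lf r x (snd z) > a}"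
    using Lf_nonneg[of _ r] assms by force
  then have "measure r ({z. fst z = x} \<inter> set_pmf r) \<le> Jm r x a"
    unfolding Jm_def by (rule measure_pmf.finite_measure_mono) auto
  then have "mx r x \<le> Jm r x a" by (simp add: measure_Int_set_pmf mx_meas)
  then show ?thesis using Jm_le_mx[of r x a] by simp
qed

lemma Jm_anti: assumes "a \<le> b" shows "Jm r x b \<le> Jm r x a"
  unfolding Jm_def by (rule measure_pmf.finite_measure_mono) (use assms in auto)

lemma Jm_lim: "(\<lambda>k::nat. Jm r x (real k)) \<longlonglongrightarrow> 0"
proof -
  have "(\<lambda>k. measure r {z. fst z = x \<and> Lf r x (snd z) > real k}) \<longlonglongrightarrow>
          measure r (\<Inter>k. {z. fst z = x \<and> Lf r x (snd z) > real k})"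
    by (rule measure_pmf.finite_Lim_measure_decseq) (auto simp: decseq_def)
  moreover have "(\<Inter>k. {z. fst z = x \<and> Lf r x (snd z) > real k}) = {}"
  proof -
    { fix z assume "\<forall>k. Lf r x (snd z) > real (k::nat)"
      then have False using reals_Archimedean2[of "Lf r x (snd z)"] by (meson less_asym) }
    then show ?thesis by auto
  qed
  ultimately show ?thesis by (simp add: Jm_def)
qed

lemma S_iff: assumes "mx r x > 0" shows "(Jm r x a / mx r x \<le> \<epsilon>) \<longleftrightarrow> Jm r x a \<le> \<epsilon> * mx r x"
  using assms by (simp add: divide_le_eq)

lemma S_nonempty: assumes "mx r x > 0" "\<epsilon> > 0" shows "\<exists>a. Jm r x a \<le> \<epsilon> * mx r x"
proof -
  have "\<epsilon> * mx r x > 0" using assms by simp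
  then have "eventually (\<lambda>k. Jm r x (real k) < \<epsilon> * mx r x) sequentially"
    by (rule order_tendstoD(2)[OF Jm_lim])
  then obtain N where "\<forall>k\<ge>N. Jm r x (real k) < \<epsilon> * mx r x"
    by (auto simp: eventually_sequentially)
  then have "Jm r x (real N) < \<epsilon> * mx r x" by blast
  then show ?thesis by (intro exI[of _ "real N"]) simp
qed

lemma S_ge0: assumes "mx r x > 0" "\<epsilon> < 1" "Jm r x a \<le> \<epsilon> * mx r x" shows "a \<ge> 0"
proof (rule ccontr)
  assume "\<not> a \<ge> 0"
  then have "Jm r x a = mx r x" by (intro Jm_neg) simp
  with assms show False by (simp add: mult_less_cancel_right2 not_le)
qed

lemma hb_alt: assumes "mx r x > 0" shows "hb \<epsilon> r x = Inf {a. Jm r x a \<le> \<epsilon> * mx r x}"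
  unfolding hb_Jm using S_iff[OF assms] by simp

lemma hb_bdd: assumes "mx r x > 0" "\<epsilon> < 1" shows "bdd_below {a. Jm r x a \<le> \<epsilon> * mx r x}"
  using S_ge0[OF assms] by (intro bdd_belowI[of _ 0]) auto

lemma hb_lower: assumes "mx r x > 0" "\<epsilon> < 1" "Jm r x a \<le> \<epsilon> * mx r x" shows "hb \<epsilon> r x \<le> a"
  unfolding hb_alt[OF assms(1)] by (rule cInf_lower) (use assms hb_bdd[OF assms(1,2)] in auto)

lemma hb_nonneg: assumes "mx r x > 0" "\<epsilon> > 0" "\<epsilon> < 1" shows "hb \<epsilon> r x \<ge> 0"
  unfolding hb_alt[OF assms(1)] using S_nonempty[OF assms(1,2)] S_ge0[OF assms(1,3)]
  by (intro cInf_greatest) auto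

lemma hb_spec: assumes "mx r x > 0" "\<epsilon> > 0" "\<epsilon> < 1" "\<eta> > 0"
  shows "Jm r x (hb \<epsilon> r x + \<eta>) \<le> \<epsilon> * mx r x"
proof -
  define X where "X = {a. Jm r x a \<le> \<epsilon> * mx r x}"
  have h: "hb \<epsilon> r x = Inf X" unfolding X_def by (rule hb_alt[OF assms(1)])
  have "Inf X < hb \<epsilon> r x + \<eta>" unfolding h using assms(4) by simp
  moreover have "X \<noteq> {}" unfolding X_def using S_nonempty[OF assms(1,2)] by blast
  moreover have "bdd_below X" unfolding X_def by (rule hb_bdd[OF assms(1,3)])
  ultimately obtain a where "a \<in> X" "a < hb \<epsilon> r x + \<eta>"
    using cInf_less_iff[of X] by metis
  then have a: "Jm r x a \<le> \<epsilon> * mx r x" "a < hb \<epsilon> r x + \<eta>" unfolding X_def by auto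
  have "Jm r x (hb \<epsilon> r x + \<eta>) \<le> Jm r x a" by (rule Jm_anti) (use a in simp)
  then show ?thesis using a(1) by linarith
qed

lemma hb_anti: assumes "mx r x > 0" "0 < \<epsilon>" "\<epsilon> \<le> \<epsilon>'" "\<epsilon>' < 1"
  shows "hb \<epsilon>' r x \<le> hb \<epsilon> r x"
proof (rule field_le_epsilon)
  fix e :: real assume "e > 0"
  have "Jm r x (hb \<epsilon> r x + e) \<le> \<epsilon> * mx r x"
    by (rule hb_spec) (use assms \<open>e>0\<close> in auto)
  also have "\<dots> \<le> \<epsilon>' * mx r x" by (rule mult_right_mono) (use assms in auto)
  finally show "hb \<epsilon>' r x \<le> hb \<epsilon> r x + e" by (rule hb_lower[OF assms(1,4)])
qed


definition E :: "('x \<times> 'y) pmf \<Rightarrow> 'x \<Rightarrow> ('y \<Rightarrow> ennreal) \<Rightarrow> ennreal" where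
  "E r x f = (\<integral>\<^sup>+ y. ennreal (pmf r (x,y)) * f y \<partial>count_space UNIV)"

lemma nn_pair: "(\<integral>\<^sup>+ z. f z \<partial>measure_pmf r) = (\<integral>\<^sup>+ x. E r x (\<lambda>y. f (x,y)) \<partial>count_space UNIV)"
proof -
  have "(\<integral>\<^sup>+ z. f z \<partial>measure_pmf r) = (\<integral>\<^sup>+ z. ennreal (pmf r z) * f z \<partial>count_space UNIV)"
    by (rule nn_integral_measure_pmf)
  also have "\<dots> = (\<integral>\<^sup>+ x. \<integral>\<^sup>+ y. ennreal (pmf r (x,y)) * f (x,y) \<partial>count_space UNIV \<partial>count_space UNIV)"
    by (rule nn_integral_fst_count_space[symmetric, where f="\<lambda>z. ennreal (pmf r z) * f z"])
  finally show ?thesis by (simp add: E_def)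
qed

lemma nn_slice: "(\<integral>\<^sup>+ z. indicator {z. fst z = x} z * f (snd z) \<partial>measure_pmf r) = E r x f"
proof -
  have "(\<integral>\<^sup>+ z. indicator {z. fst z = x} z * f (snd z) \<partial>measure_pmf r)
      = (\<integral>\<^sup>+ x'. E r x f * indicator {x} x' \<partial>count_space UNIV)"
    unfolding nn_pair by (intro nn_integral_cong) (auto simp: E_def indicator_def)
  also have "\<dots> = E r x f" by simp
  finally show ?thesis .
qed

lemma emeasure_slice: "emeasure (measure_pmf r) {z. fst z = x \<and> snd z \<in> A} = E r x (indicator A)"
proof -
  have "emeasure (measure_pmf r) {z. fst z = x \<and> snd z \<in> A} =
     (\<integral>\<^sup>+ z. indicator {z. fst z = x \<and> snd z \<in> A} z \<partial>measure_pmf r)" by simp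
  also have "\<dots> = (\<integral>\<^sup>+ z. indicator {z. fst z = x} z * indicator A (snd z) \<partial>measure_pmf r)"
    by (intro nn_integral_cong) (auto simp: indicator_def)
  finally show ?thesis by (simp add: nn_slice)
qed

lemma mx_E: "ennreal (mx r x) = E r x (\<lambda>_. 1)"
proof -
  have "ennreal (mx r x) = emeasure (measure_pmf r) {z. fst z = x \<and> snd z \<in> UNIV}"
    by (simp add: mx_meas measure_pmf.emeasure_eq_measure)
  also have "\<dots> = E r x (\<lambda>_. 1)" using emeasure_slice[of r x UNIV] by simp
  finally show ?thesis .
qed

lemma Jm_E: "ennreal (Jm r x a) = E r x (indicator {y. Lf r x y > a})"
proof -
  have "ennreal (Jm r x a) = emeasure (measure_pmf r) {z. fst z = x \<and> snd z \<in> {y. Lf r x y > a}}"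
    by (simp add: Jm_def measure_pmf.emeasure_eq_measure)
  also have "\<dots> = E r x (indicator {y. Lf r x y > a})" by (rule emeasure_slice)
  finally show ?thesis .
qed

lemma E_mono: "(\<And>y. f y \<le> g y) \<Longrightarrow> E r x f \<le> E r x g"
  unfolding E_def by (intro nn_integral_mono mult_left_mono) auto

lemma Jm_Markov: assumes "t > 0"
  shows "ennreal (Jm r x t) \<le> E r x (\<lambda>y. ennreal (Lf r x y)) / ennreal t"
proof -
  have "ennreal (Jm r x t) \<le> E r x (\<lambda>y. ennreal (Lf r x y) / ennreal t)"
    unfolding Jm_E
  proof (rule E_mono)
    fix y show "indicator {y. Lf r x y > t} y \<le> ennreal (Lf r x y) / ennreal t"
    proof (cases "Lf r x y > t")
      case True
      then have "ennreal (Lf r x y) / ennreal t = ennreal (Lf r x y / t)"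
        using assms by (intro divide_ennreal) auto
      moreover have "1 \<le> Lf r x y / t" using True assms by simp
      ultimately show ?thesis using True by (simp add: ennreal_ge_1)
    qed simp
  qed
  also have "\<dots> = E r x (\<lambda>y. ennreal (Lf r x y)) / ennreal t"
    unfolding E_def by (simp add: nn_integral_divide[symmetric] ennreal_times_divide)
  finally show ?thesis .
qed

lemma hb_Markov: assumes "mx r x > 0" "0 < \<epsilon>" "\<epsilon> < 1"
  shows "ennreal (mx r x) * ennreal (hb \<epsilon> r x) \<le> E r x (\<lambda>y. ennreal (Lf r x y)) / ennreal \<epsilon>"
proof (cases "E r x (\<lambda>y. ennreal (Lf r x y)) = \<top>")
  case True then show ?thesis using assms by (simp add: ennreal_top_divide)
next
  case False
  then obtain e where e: "E r x (\<lambda>y. ennreal (Lf r x y)) = ennreal e" "e \<ge> 0"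
    by (cases "E r x (\<lambda>y. ennreal (Lf r x y))") auto
  have pos: "\<epsilon> * mx r x > 0" using assms by simp
  have hle: "hb \<epsilon> r x \<le> e / (\<epsilon> * mx r x)"
  proof (rule field_le_epsilon)
    fix \<theta> :: real assume th: "\<theta> > 0"
    define t where "t = e / (\<epsilon> * mx r x) + \<theta>"
    have t0: "t > 0" unfolding t_def using th e(2) pos by (simp add: add_nonneg_pos)
    have "ennreal (Jm r x t) \<le> ennreal e / ennreal t" using Jm_Markov[OF t0, of r x] e(1) by simp
    also have "\<dots> = ennreal (e / t)" using t0 e(2) by (intro divide_ennreal) auto
    finally have "Jm r x t \<le> e / t" using t0 e(2) by (simp add: ennreal_le_iff)
    also have "e / t \<le> \<epsilon> * mx r x"
    proof -
      have "\<epsilon> * mx r x \<noteq> 0" using pos by linarith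
      then have "\<epsilon> * mx r x * t = e + \<epsilon> * mx r x * \<theta>" unfolding t_def
        by (simp add: distrib_left)
      moreover have "\<epsilon> * mx r x * \<theta> > 0" using pos th by simp
      ultimately have "e \<le> \<epsilon> * mx r x * t" by linarith
      then show ?thesis using t0 by (simp add: divide_le_eq)
    qed
    finally have "Jm r x t \<le> \<epsilon> * mx r x" .
    then show "hb \<epsilon> r x \<le> e / (\<epsilon> * mx r x) + \<theta>"
      unfolding t_def[symmetric] by (rule hb_lower[OF assms(1,3)])
  qed
  have "mx r x * hb \<epsilon> r x \<le> mx r x * (e / (\<epsilon> * mx r x))"
    by (rule mult_left_mono[OF hle]) (use assms in simp)
  also have "\<dots> = e / \<epsilon>" using assms by simp
  finally have "mx r x * hb \<epsilon> r x \<le> e / \<epsilon>" .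
  then have "ennreal (mx r x * hb \<epsilon> r x) \<le> ennreal (e / \<epsilon>)" by (rule ennreal_leI)
  then show ?thesis using e assms by (simp add: ennreal_mult'[symmetric] divide_ennreal)
qed


lemma emeasure_pmf_count: "emeasure (measure_pmf p) A = (\<integral>\<^sup>+ x. ennreal (pmf p x) * indicator A x \<partial>count_space UNIV)"
  using nn_integral_measure_pmf[of p "indicator A"] by simp

locale mix =
  fixes q q1 q2 :: "('x \<times> 'y) pmf" and \<alpha>1 \<alpha>2 :: real
  assumes a1: "\<alpha>1 > 0" and a2: "\<alpha>2 > 0" and a12: "\<alpha>1 + \<alpha>2 = 1"
    and qmix: "\<And>z. pmf q z = \<alpha>1 * pmf q1 z + \<alpha>2 * pmf q2 z"
begin

lemma mix_measure: "measure q S = \<alpha>1 * measure q1 S + \<alpha>2 * measure q2 S"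
proof -
  have "measure q S = infsetsum (\<lambda>z. \<alpha>1 * pmf q1 z + \<alpha>2 * pmf q2 z) S"
    by (simp add: measure_pmf_conv_infsetsum qmix)
  also have "\<dots> = infsetsum (\<lambda>z. \<alpha>1 * pmf q1 z) S + infsetsum (\<lambda>z. \<alpha>2 * pmf q2 z) S"
    by (rule infsetsum_add) auto
  also have "\<dots> = \<alpha>1 * measure q1 S + \<alpha>2 * measure q2 S"
    by (simp add: infsetsum_cmult_right[OF pmf_abs_summable] measure_pmf_conv_infsetsum)
  finally show ?thesis .
qed

lemma mix_nn: "(\<integral>\<^sup>+ z. f z \<partial>measure_pmf q) =
   ennreal \<alpha>1 * (\<integral>\<^sup>+ z. f z \<partial>measure_pmf q1) + ennreal \<alpha>2 * (\<integral>\<^sup>+ z. f z \<partial>measure_pmf q2)"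
proof -
  have "(\<integral>\<^sup>+ z. f z \<partial>measure_pmf q) = (\<integral>\<^sup>+ z. ennreal \<alpha>1 * (ennreal (pmf q1 z) * f z) +
        ennreal \<alpha>2 * (ennreal (pmf q2 z) * f z) \<partial>count_space UNIV)"
    unfolding nn_integral_measure_pmf qmix using a1 a2
    by (intro nn_integral_cong) (simp add: ennreal_plus ennreal_mult distrib_right mult.assoc)
  also have "\<dots> = ennreal \<alpha>1 * (\<integral>\<^sup>+ z. ennreal (pmf q1 z) * f z \<partial>count_space UNIV) +
     ennreal \<alpha>2 * (\<integral>\<^sup>+ z. ennreal (pmf q2 z) * f z \<partial>count_space UNIV)"
    by (simp add: nn_integral_add nn_integral_cmult)
  finally show ?thesis by (simp add: nn_integral_measure_pmf)
qed

lemma mix_my: "my q y = \<alpha>1 * my q1 y + \<alpha>2 * my q2 y"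
  by (simp add: my_meas mix_measure)
lemma mix_mx: "mx q x = \<alpha>1 * mx q1 x + \<alpha>2 * mx q2 x"
  by (simp add: mx_meas mix_measure)

lemma q_ge1: "pmf q z \<ge> \<alpha>1 * pmf q1 z" using qmix a2 by (simp add: add_increasing2)
lemma q_ge2: "pmf q z \<ge> \<alpha>2 * pmf q2 z" using qmix a1 by (simp add: add_increasing)

end

lemma pmf_le_my: "pmf r (x,y) \<le> my r y"
proof -
  have "pmf r (x,y) = measure r {(x,y)}" by (simp add: measure_pmf_single)
  also have "\<dots> \<le> measure r {z. snd z = y}" by (rule measure_pmf.finite_measure_mono) auto
  finally show ?thesis by (simp add: my_meas)
qed

lemma Lf_alt: "Lf r x y = log 2 (my r y / pmf r (x,y))"
  by (simp add: Lf_def my_def)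

lemma L_compare:
  assumes ge: "\<And>z. pmf q z \<ge> \<alpha> * pmf qi z" and a: "\<alpha> > 0" and p: "pmf qi (x,y) > 0"
  shows "Lf q x y \<le> Lf qi x y + log 2 (my q y / (\<alpha> * my qi y))"
proof -
  have p1: "pmf q (x,y) \<ge> \<alpha> * pmf qi (x,y)" by (rule ge)
  have ap: "\<alpha> * pmf qi (x,y) > 0" using a p by simp
  have pq: "pmf q (x,y) > 0" using p1 ap by linarith
  have mq: "my q y > 0" using pmf_le_my[of q x y] pq by linarith
  have mi: "my qi y > 0" using pmf_le_my[of qi x y] p by linarith
  have "my q y / pmf q (x,y) \<le> my q y / (\<alpha> * pmf qi (x,y))"
    using p1 ap mq by (intro divide_left_mono) auto
  also have "\<dots> = (my q y / (\<alpha> * my qi y)) * (my qi y / pmf qi (x,y))"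
    using mi a p by (simp add: field_simps)
  finally have le: "my q y / pmf q (x,y) \<le> (my q y / (\<alpha> * my qi y)) * (my qi y / pmf qi (x,y))" .
  have "Lf q x y \<le> log 2 ((my q y / (\<alpha> * my qi y)) * (my qi y / pmf qi (x,y)))"
    unfolding Lf_alt by (rule log_mono[OF _ _ le]) (use mq pq in auto)
  also have "\<dots> = log 2 (my q y / (\<alpha> * my qi y)) + log 2 (my qi y / pmf qi (x,y))"
    using mq mi a p by (intro log_mult_pos) auto
  finally show ?thesis unfolding Lf_alt by simp
qed


definition Bset :: "('x \<times> 'y) pmf \<Rightarrow> ('x \<times> 'y) pmf \<Rightarrow> real \<Rightarrow> real \<Rightarrow> 'y set" where
  "Bset q qi \<alpha> c = {y. my q y > 2 powr c * \<alpha> * my qi y}"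

lemma pmf_subadd: "measure (measure_pmf p) (A \<union> B) \<le> measure p A + measure p B"
  by (rule measure_subadditive) (auto simp: measure_pmf.emeasure_eq_measure)

lemma part_bound:
  assumes ge: "\<And>z. pmf q z \<ge> \<alpha> * pmf qi z" and a: "\<alpha> > 0"
  shows "measure qi {z. fst z = x \<and> Lf q x (snd z) > a + c}
     \<le> Jm qi x a + measure qi {z. fst z = x \<and> snd z \<in> Bset q qi \<alpha> c}"
proof -
  let ?S = "{z. fst z = x \<and> Lf q x (snd z) > a + c}"
  let ?A = "{z. fst z = x \<and> Lf qi x (snd z) > a}"
  let ?C = "{z. fst z = x \<and> snd z \<in> Bset q qi \<alpha> c}"
  have sub: "?S \<inter> set_pmf qi \<subseteq> ?A \<union> ?C"
  proof
    fix z assume z: "z \<in> ?S \<inter> set_pmf qi"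
    obtain y where zy: "z = (x,y)" using z by (cases z) auto
    show "z \<in> ?A \<union> ?C"
    proof (cases "y \<in> Bset q qi \<alpha> c")
      case True then show ?thesis using zy by auto
    next
      case False
      have p: "pmf qi (x,y) > 0" using z zy by (simp add: pmf_positive)
      have mi: "my qi y > 0" using pmf_le_my[of qi x y] p by linarith
      have pq: "pmf q (x,y) > 0" using ge[of "(x,y)"] a p
        by (meson less_le_trans mult_pos_pos)
      have mq: "my q y > 0" using pmf_le_my[of q x y] pq by linarith
      have le: "my q y \<le> 2 powr c * \<alpha> * my qi y" using False by (simp add: Bset_def)
      have r1: "my q y / (\<alpha> * my qi y) \<le> 2 powr c"
        using le a mi by (simp add: divide_le_eq mult.assoc)
      have r0: "my q y / (\<alpha> * my qi y) > 0" using mq mi a by simp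
      have "log 2 (my q y / (\<alpha> * my qi y)) \<le> log 2 (2 powr c)"
        by (rule log_mono[OF _ r0 r1]) simp
      then have lg: "log 2 (my q y / (\<alpha> * my qi y)) \<le> c" by simp
      have "Lf q x y \<le> Lf qi x y + log 2 (my q y / (\<alpha> * my qi y))"
        by (rule L_compare[OF ge a p])
      moreover have "Lf q x y > a + c" using z zy by auto
      ultimately have "Lf qi x y > a" using lg by linarith
      then show ?thesis using zy by auto
    qed
  qed
  have "measure qi ?S = measure qi (?S \<inter> set_pmf qi)" by (simp add: measure_Int_set_pmf)
  also have "\<dots> \<le> measure qi (?A \<union> ?C)" by (rule measure_pmf.finite_measure_mono[OF sub]) auto
  also have "\<dots> \<le> measure qi ?A + measure qi ?C" by (rule pmf_subadd)
  finally show ?thesis by (simp add: Jm_def)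
qed

lemma B_small:
  fixes q qi :: "('x \<times> 'y) pmf"
  assumes a: "\<alpha> > 0"
  shows "measure qi {z. snd z \<in> Bset q qi \<alpha> c} \<le> 1 / (2 powr c * \<alpha>)"
proof -
  let ?B = "Bset q qi \<alpha> c"
  have K: "2 powr c * \<alpha> > 0" using a by simp
  have "measure qi {z. snd z \<in> ?B} = measure (map_pmf snd qi) ?B" by (simp add: vimage_def)
  also have "\<dots> = infsetsum (my qi) ?B" by (simp add: measure_pmf_conv_infsetsum my_def[abs_def])
  also have "\<dots> \<le> infsetsum (\<lambda>y. my q y * (1 / (2 powr c * \<alpha>))) ?B"
  proof (rule infsetsum_mono)
    show "Infinite_Set_Sum.abs_summable_on (my qi) ?B" unfolding my_def[abs_def] by auto
    show "Infinite_Set_Sum.abs_summable_on (\<lambda>y. my q y * (1 / (2 powr c * \<alpha>))) ?B"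
      by (rule abs_summable_on_cmult_left) (auto simp: my_def[abs_def])
    fix y assume "y \<in> ?B"
    then have "2 powr c * \<alpha> * my qi y < my q y" by (simp add: Bset_def)
    then show "my qi y \<le> my q y * (1 / (2 powr c * \<alpha>))" using K
      by (simp add: field_simps)
  qed
  also have "\<dots> = infsetsum (my q) ?B * (1 / (2 powr c * \<alpha>))"
    by (rule infsetsum_cmult_left) (auto simp: my_def[abs_def])
  also have "\<dots> \<le> 1 * (1 / (2 powr c * \<alpha>))"
  proof (rule mult_right_mono)
    have "infsetsum (my q) ?B = measure (map_pmf snd q) ?B"
      by (simp add: measure_pmf_conv_infsetsum my_def[abs_def])
    then show "infsetsum (my q) ?B \<le> 1" by simp
  qed (use K in simp)
  finally show ?thesis by simp
qed


definition bm :: "('x \<times> 'y) pmf \<Rightarrow> ('x \<times> 'y) pmf \<Rightarrow> ('x \<times> 'y) pmf \<Rightarrow> real \<Rightarrow> real \<Rightarrow> real \<Rightarrow> 'x \<Rightarrow> real" where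
  "bm q q1 q2 \<alpha>1 \<alpha>2 c x = \<alpha>1 * measure q1 {z. fst z = x \<and> snd z \<in> Bset q q1 \<alpha>1 c}
      + \<alpha>2 * measure q2 {z. fst z = x \<and> snd z \<in> Bset q q2 \<alpha>2 c}"

context mix
begin

lemma Jm_mix: "Jm q x (a + c) \<le> \<alpha>1 * Jm q1 x a + \<alpha>2 * Jm q2 x a + bm q q1 q2 \<alpha>1 \<alpha>2 c x"
proof -
  let ?S = "{z. fst z = x \<and> Lf q x (snd z) > a + c}"
  have "Jm q x (a + c) = \<alpha>1 * measure q1 ?S + \<alpha>2 * measure q2 ?S" by (simp add: Jm_def mix_measure)
  also have "\<dots> \<le> \<alpha>1 * (Jm q1 x a + measure q1 {z. fst z = x \<and> snd z \<in> Bset q q1 \<alpha>1 c})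
                 + \<alpha>2 * (Jm q2 x a + measure q2 {z. fst z = x \<and> snd z \<in> Bset q q2 \<alpha>2 c})"
    by (intro add_mono mult_left_mono part_bound q_ge1 q_ge2) (use a1 a2 in auto)
  finally show ?thesis by (simp add: bm_def distrib_left)
qed

lemma good:
  assumes m: "mx q x > 0" "mx q1 x > 0" "mx q2 x > 0" and e: "0 < \<epsilon>" "\<epsilon> < 1"
    and b: "bm q q1 q2 \<alpha>1 \<alpha>2 c x \<le> \<epsilon> / 2 * mx q x"
  shows "hb \<epsilon> q x \<le> max (hb (\<epsilon>/2) q1 x) (hb (\<epsilon>/2) q2 x) + 1 + c"
proof -
  define a where "a = max (hb (\<epsilon>/2) q1 x) (hb (\<epsilon>/2) q2 x) + 1"
  have j1: "Jm q1 x a \<le> \<epsilon>/2 * mx q1 x"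
  proof -
    have "Jm q1 x a \<le> Jm q1 x (hb (\<epsilon>/2) q1 x + 1)" by (rule Jm_anti) (simp add: a_def)
    also have "\<dots> \<le> \<epsilon>/2 * mx q1 x" by (rule hb_spec) (use m e in auto)
    finally show ?thesis .
  qed
  have j2: "Jm q2 x a \<le> \<epsilon>/2 * mx q2 x"
  proof -
    have "Jm q2 x a \<le> Jm q2 x (hb (\<epsilon>/2) q2 x + 1)" by (rule Jm_anti) (simp add: a_def)
    also have "\<dots> \<le> \<epsilon>/2 * mx q2 x" by (rule hb_spec) (use m e in auto)
    finally show ?thesis .
  qed
  have "Jm q x (a + c) \<le> \<alpha>1 * Jm q1 x a + \<alpha>2 * Jm q2 x a + bm q q1 q2 \<alpha>1 \<alpha>2 c x" by (rule Jm_mix)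
  also have "\<dots> \<le> \<alpha>1 * (\<epsilon>/2 * mx q1 x) + \<alpha>2 * (\<epsilon>/2 * mx q2 x) + \<epsilon> / 2 * mx q x"
    by (intro add_mono mult_left_mono j1 j2 b) (use a1 a2 in auto)
  also have "\<dots> = \<epsilon> * mx q x" by (simp add: mix_mx field_simps)
  finally have "Jm q x (a + c) \<le> \<epsilon> * mx q x" .
  then have "hb \<epsilon> q x \<le> a + c" by (rule hb_lower[OF m(1) e(2)])
  then show ?thesis by (simp add: a_def)
qed

end


lemma int_mx: "(\<integral>\<^sup>+ x. ennreal (mx r x) \<partial>count_space UNIV) = 1"
proof -
  have "(\<integral>\<^sup>+ x. ennreal (mx r x) \<partial>count_space UNIV) = emeasure (measure_pmf (map_pmf fst r)) UNIV"
    unfolding mx_def by (rule nn_integral_pmf)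
  then show ?thesis by simp
qed

lemma int_E: "(\<integral>\<^sup>+ x. E r x (f x) \<partial>count_space UNIV) = (\<integral>\<^sup>+ z. f (fst z) (snd z) \<partial>measure_pmf r)"
  by (simp add: nn_pair)

lemma E_cmult: "E r x (\<lambda>y. c * f y) = c * E r x f"
  unfolding E_def by (subst nn_integral_cmult[symmetric]) (auto intro!: nn_integral_cong simp: ac_simps)

context mix
begin

lemma I1:
  assumes e: "0 < \<epsilon>" "\<epsilon> < 1" and c: "c \<ge> 0"
    and pos: "\<And>x. mx q x > 0 \<Longrightarrow> mx q1 x > 0 \<and> mx q2 x > 0"
  defines "D \<equiv> {x. mx q x > 0 \<and> bm q q1 q2 \<alpha>1 \<alpha>2 c x > \<epsilon>/2 * mx q x}"
  shows "(\<integral>\<^sup>+ x. ennreal (mx q x) * ennreal (hb \<epsilon> q x) \<partial>count_space UNIV)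
     \<le> (\<integral>\<^sup>+ x. ennreal (mx q x) * ennreal (max (hb (\<epsilon>/2) q1 x) (hb (\<epsilon>/2) q2 x)) \<partial>count_space UNIV)
        + ennreal (1 + c)
        + (\<integral>\<^sup>+ z. indicator D (fst z) * ennreal (Lf q (fst z) (snd z)) \<partial>measure_pmf q) / ennreal \<epsilon>"
proof -
  let ?f1 = "\<lambda>x. ennreal (mx q x) * ennreal (max (hb (\<epsilon>/2) q1 x) (hb (\<epsilon>/2) q2 x))"
  let ?f2 = "\<lambda>x. ennreal (mx q x) * ennreal (1 + c)"
  let ?f3 = "\<lambda>x. E q x (\<lambda>y. indicator D x * ennreal (Lf q x y)) / ennreal \<epsilon>"
  have pw: "ennreal (mx q x) * ennreal (hb \<epsilon> q x) \<le> ?f1 x + ?f2 x + ?f3 x" for x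
  proof (cases "mx q x > 0")
    case False
    then have "mx q x = 0" using pmf_nonneg[of _ x] by (simp add: mx_def not_less order.antisym)
    then show ?thesis by simp
  next
    case True
    note p12 = pos[OF True]
    show ?thesis
    proof (cases "x \<in> D")
      case True': True
      have "ennreal (mx q x) * ennreal (hb \<epsilon> q x) \<le> E q x (\<lambda>y. ennreal (Lf q x y)) / ennreal \<epsilon>"
        by (rule hb_Markov[OF True e])
      also have "\<dots> = ?f3 x" using True' by simp
      finally show ?thesis by (simp add: add_increasing)
    next
      case False
      then have b: "bm q q1 q2 \<alpha>1 \<alpha>2 c x \<le> \<epsilon> / 2 * mx q x" using True by (simp add: D_def)
      have h: "hb \<epsilon> q x \<le> max (hb (\<epsilon>/2) q1 x) (hb (\<epsilon>/2) q2 x) + (1 + c)"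
        using good[OF True p12[THEN conjunct1] p12[THEN conjunct2] e b] by simp
      have m0: "max (hb (\<epsilon>/2) q1 x) (hb (\<epsilon>/2) q2 x) \<ge> 0"
        using hb_nonneg[of q1 x "\<epsilon>/2"] p12 e by (simp add: le_max_iff_disj)
      have "ennreal (mx q x) * ennreal (hb \<epsilon> q x) \<le>
            ennreal (mx q x) * ennreal (max (hb (\<epsilon>/2) q1 x) (hb (\<epsilon>/2) q2 x) + (1 + c))"
        by (intro mult_left_mono ennreal_leI h) auto
      also have "\<dots> = ?f1 x + ?f2 x" using m0 c by (simp add: ennreal_plus distrib_left)
      finally show ?thesis by (simp add: add_increasing2)
    qed
  qed
  have "(\<integral>\<^sup>+ x. ennreal (mx q x) * ennreal (hb \<epsilon> q x) \<partial>count_space UNIV)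
      \<le> (\<integral>\<^sup>+ x. ?f1 x + ?f2 x + ?f3 x \<partial>count_space UNIV)"
    by (rule nn_integral_mono) (rule pw)
  also have "\<dots> = (\<integral>\<^sup>+ x. ?f1 x \<partial>count_space UNIV) + (\<integral>\<^sup>+ x. ?f2 x \<partial>count_space UNIV)
      + (\<integral>\<^sup>+ x. ?f3 x \<partial>count_space UNIV)"
    by (simp add: nn_integral_add)
  also have "(\<integral>\<^sup>+ x. ?f2 x \<partial>count_space UNIV) = ennreal (1 + c)"
    by (simp add: nn_integral_multc int_mx)
  also have "(\<integral>\<^sup>+ x. ?f3 x \<partial>count_space UNIV) =
      (\<integral>\<^sup>+ z. indicator D (fst z) * ennreal (Lf q (fst z) (snd z)) \<partial>measure_pmf q) / ennreal \<epsilon>"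
    by (simp add: nn_integral_divide int_E)
  finally show ?thesis .
qed

end


lemma log_term_bound:
  fixes q qi :: "('x \<times> 'y) pmf"
  assumes a: "\<alpha> > 0"
  shows "(\<integral>\<^sup>+ z. ennreal (log 2 (my q (snd z) / (\<alpha> * my qi (snd z)))) \<partial>measure_pmf qi)
     \<le> ennreal (1 / (\<alpha> * ln 2))"
proof -
  have "(\<integral>\<^sup>+ z. ennreal (log 2 (my q (snd z) / (\<alpha> * my qi (snd z)))) \<partial>measure_pmf qi)
      = (\<integral>\<^sup>+ y. ennreal (log 2 (my q y / (\<alpha> * my qi y))) \<partial>measure_pmf (map_pmf snd qi))"
    by simp
  also have "\<dots> = (\<integral>\<^sup>+ y. ennreal (my qi y) * ennreal (log 2 (my q y / (\<alpha> * my qi y))) \<partial>count_space UNIV)"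
    by (simp add: nn_integral_measure_pmf my_def)
  also have "\<dots> \<le> (\<integral>\<^sup>+ y. ennreal (1 / (\<alpha> * ln 2)) * ennreal (my q y) \<partial>count_space UNIV)"
  proof (rule nn_integral_mono)
    fix y
    show "ennreal (my qi y) * ennreal (log 2 (my q y / (\<alpha> * my qi y))) \<le> ennreal (1 / (\<alpha> * ln 2)) * ennreal (my q y)"
    proof (cases "log 2 (my q y / (\<alpha> * my qi y)) > 0 \<and> my qi y > 0")
      case False
      then have "ennreal (my qi y) * ennreal (log 2 (my q y / (\<alpha> * my qi y))) = 0"
        using pmf_nonneg[of _ y] by (auto simp: my_def ennreal_eq_0_iff not_less)
      then show ?thesis by (metis zero_le)
    next
      case True
      let ?u = "my q y / (\<alpha> * my qi y)"
      have ug: "?u \<ge> 0" using True a by (simp add: my_def)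
      have "?u \<noteq> 0" proof
        assume h: "?u = 0"
        have "log 2 ?u = 0" unfolding h by (simp add: log_def)
        then show False using True by linarith
      qed
      then have u0: "?u > 0" using ug by linarith
      have "log 2 ?u = ln ?u / ln 2" by (simp add: log_def)
      also have "\<dots> \<le> ?u / ln 2"
        by (rule divide_right_mono) (use ln_less_self[OF u0] in auto)
      finally have lu: "log 2 ?u \<le> ?u / ln 2" .
      have "my qi y * log 2 ?u \<le> my qi y * (?u / ln 2)"
        using lu True by (intro mult_left_mono) auto
      also have "\<dots> = 1 / (\<alpha> * ln 2) * my q y" using True a by (simp add: field_simps)
      finally have "my qi y * log 2 ?u \<le> 1 / (\<alpha> * ln 2) * my q y" .
      then have "ennreal (my qi y * log 2 ?u) \<le> ennreal (1 / (\<alpha> * ln 2) * my q y)" by (rule ennreal_leI)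
      moreover have "ennreal (my qi y) * ennreal (log 2 ?u) = ennreal (my qi y * log 2 ?u)"
        using True by (simp add: ennreal_mult)
      moreover have "ennreal (1 / (\<alpha> * ln 2)) * ennreal (my q y) = ennreal (1 / (\<alpha> * ln 2) * my q y)"
        using a by (intro ennreal_mult[symmetric]) (auto simp: my_def)
      ultimately show ?thesis by simp
    qed
  qed
  also have "\<dots> = ennreal (1 / (\<alpha> * ln 2))"
    by (simp add: nn_integral_cmult my_def[abs_def] int_mx[unfolded mx_def] nn_integral_pmf)
  finally show ?thesis .
qed

context mix
begin

lemma I2_i:
  fixes qi :: "('x \<times> 'y) pmf"
  assumes ge: "\<And>z. pmf q z \<ge> \<alpha> * pmf qi z" and a: "\<alpha> > 0"
  shows "(\<integral>\<^sup>+ z. indicator D (fst z) * ennreal (Lf q (fst z) (snd z)) \<partial>measure_pmf qi)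
    \<le> (\<integral>\<^sup>+ z. indicator D (fst z) * ennreal (Lf qi (fst z) (snd z)) \<partial>measure_pmf qi) + ennreal (1 / (\<alpha> * ln 2))"
proof -
  have "(\<integral>\<^sup>+ z. indicator D (fst z) * ennreal (Lf q (fst z) (snd z)) \<partial>measure_pmf qi)
    \<le> (\<integral>\<^sup>+ z. indicator D (fst z) * ennreal (Lf qi (fst z) (snd z)) +
          ennreal (log 2 (my q (snd z) / (\<alpha> * my qi (snd z)))) \<partial>measure_pmf qi)"
  proof (rule nn_integral_mono_AE)
    show "AE z in measure_pmf qi. indicator D (fst z) * ennreal (Lf q (fst z) (snd z)) \<le>
       indicator D (fst z) * ennreal (Lf qi (fst z) (snd z)) + ennreal (log 2 (my q (snd z) / (\<alpha> * my qi (snd z))))"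
      unfolding AE_measure_pmf_iff
    proof (intro ballI)
      fix z assume z: "z \<in> set_pmf qi"
      obtain x y where zy: "z = (x,y)" by (cases z)
      have p: "pmf qi (x,y) > 0" using z zy by (simp add: pmf_positive)
      have L: "Lf q x y \<le> Lf qi x y + log 2 (my q y / (\<alpha> * my qi y))" by (rule L_compare[OF ge a p])
      have L0: "Lf qi x y \<ge> 0" using Lf_nonneg[OF z] zy by simp
      have "ennreal (Lf q x y) \<le> ennreal (Lf qi x y) + ennreal (log 2 (my q y / (\<alpha> * my qi y)))"
      proof (cases "log 2 (my q y / (\<alpha> * my qi y)) \<ge> 0")
        case True
        have "ennreal (Lf q x y) \<le> ennreal (Lf qi x y + log 2 (my q y / (\<alpha> * my qi y)))"
          by (rule ennreal_leI[OF L])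
        also have "\<dots> = ennreal (Lf qi x y) + ennreal (log 2 (my q y / (\<alpha> * my qi y)))"
          by (rule ennreal_plus[OF L0 True])
        finally show ?thesis .
      next
        case False
        have "Lf q x y \<le> Lf qi x y" using L False by linarith
        then have "ennreal (Lf q x y) \<le> ennreal (Lf qi x y)" by (rule ennreal_leI)
        then show ?thesis using add_increasing2[OF zero_le] by blast
      qed
      then show "indicator D (fst z) * ennreal (Lf q (fst z) (snd z)) \<le>
       indicator D (fst z) * ennreal (Lf qi (fst z) (snd z)) + ennreal (log 2 (my q (snd z) / (\<alpha> * my qi (snd z))))"
        using zy by (cases "x \<in> D") (simp_all add: add_increasing)
    qed
  qed
  also have "\<dots> = (\<integral>\<^sup>+ z. indicator D (fst z) * ennreal (Lf qi (fst z) (snd z)) \<partial>measure_pmf qi) +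
      (\<integral>\<^sup>+ z. ennreal (log 2 (my q (snd z) / (\<alpha> * my qi (snd z)))) \<partial>measure_pmf qi)"
    by (rule nn_integral_add) auto
  also have "\<dots> \<le> (\<integral>\<^sup>+ z. indicator D (fst z) * ennreal (Lf qi (fst z) (snd z)) \<partial>measure_pmf qi)
      + ennreal (1 / (\<alpha> * ln 2))"
    by (intro add_left_mono log_term_bound a)
  finally show ?thesis .
qed

lemma I2:
  "(\<integral>\<^sup>+ z. indicator D (fst z) * ennreal (Lf q (fst z) (snd z)) \<partial>measure_pmf q)
    \<le> ennreal \<alpha>1 * (\<integral>\<^sup>+ z. indicator D (fst z) * ennreal (Lf q1 (fst z) (snd z)) \<partial>measure_pmf q1)
      + ennreal \<alpha>2 * (\<integral>\<^sup>+ z. indicator D (fst z) * ennreal (Lf q2 (fst z) (snd z)) \<partial>measure_pmf q2)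
      + ennreal (2 / ln 2)"
proof -
  let ?I = "\<lambda>r s. (\<integral>\<^sup>+ z. indicator D (fst z) * ennreal (Lf r (fst z) (snd z)) \<partial>measure_pmf s)"
  have "?I q q = ennreal \<alpha>1 * ?I q q1 + ennreal \<alpha>2 * ?I q q2" by (rule mix_nn)
  also have "\<dots> \<le> ennreal \<alpha>1 * (?I q1 q1 + ennreal (1 / (\<alpha>1 * ln 2))) + ennreal \<alpha>2 * (?I q2 q2 + ennreal (1 / (\<alpha>2 * ln 2)))"
    by (intro add_mono mult_left_mono I2_i q_ge1 q_ge2 a1 a2) auto
  also have "\<dots> = ennreal \<alpha>1 * ?I q1 q1 + ennreal \<alpha>2 * ?I q2 q2 +
        (ennreal \<alpha>1 * ennreal (1 / (\<alpha>1 * ln 2)) + ennreal \<alpha>2 * ennreal (1 / (\<alpha>2 * ln 2)))"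
    by (simp add: distrib_left ac_simps)
  also have "ennreal \<alpha>1 * ennreal (1 / (\<alpha>1 * ln 2)) + ennreal \<alpha>2 * ennreal (1 / (\<alpha>2 * ln 2)) = ennreal (2 / ln 2)"
    using a1 a2 by (simp add: ennreal_mult[symmetric] ennreal_plus[symmetric])
  finally show ?thesis .
qed

end


lemma int_slice_measure:
  fixes qi :: "('x \<times> 'y) pmf"
  shows "(\<integral>\<^sup>+ x. ennreal (measure qi {z. fst z = x \<and> snd z \<in> B}) \<partial>count_space UNIV)
     = emeasure (measure_pmf qi) {z. snd z \<in> B}"
proof -
  have "(\<integral>\<^sup>+ x. ennreal (measure qi {z. fst z = x \<and> snd z \<in> B}) \<partial>count_space UNIV)
     = (\<integral>\<^sup>+ x. E qi x (indicator B) \<partial>count_space UNIV)"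
    by (simp add: emeasure_slice[symmetric] measure_pmf.emeasure_eq_measure)
  also have "\<dots> = (\<integral>\<^sup>+ z. indicator B (snd z) \<partial>measure_pmf qi)" by (rule int_E)
  also have "\<dots> = (\<integral>\<^sup>+ z. indicator {z. snd z \<in> B} z \<partial>measure_pmf qi)"
    by (intro nn_integral_cong) (auto simp: indicator_def)
  finally show ?thesis by simp
qed

context mix
begin

lemma bm_nonneg: "bm q q1 q2 \<alpha>1 \<alpha>2 c x \<ge> 0"
  using a1 a2 by (simp add: bm_def)

lemma I3:
  fixes c :: real
  assumes e: "0 < \<epsilon>"
  defines "D \<equiv> {x. mx q x > 0 \<and> bm q q1 q2 \<alpha>1 \<alpha>2 c x > \<epsilon>/2 * mx q x}"
  shows "emeasure (measure_pmf q) {z. fst z \<in> D} \<le> ennreal (2 / \<epsilon> * (2 / 2 powr c))"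
proof -
  let ?bm = "bm q q1 q2 \<alpha>1 \<alpha>2 c"
  let ?B1 = "Bset q q1 \<alpha>1 c" and ?B2 = "Bset q q2 \<alpha>2 c"
  have "emeasure (measure_pmf q) {z. fst z \<in> D} = emeasure (measure_pmf (map_pmf fst q)) D"
    by (simp add: vimage_def)
  also have "\<dots> = (\<integral>\<^sup>+ x. ennreal (mx q x) * indicator D x \<partial>count_space UNIV)"
    by (simp add: emeasure_pmf_count mx_def)
  also have "\<dots> \<le> (\<integral>\<^sup>+ x. ennreal (2 / \<epsilon>) * ennreal (?bm x) \<partial>count_space UNIV)"
  proof (rule nn_integral_mono)
    fix x show "ennreal (mx q x) * indicator D x \<le> ennreal (2 / \<epsilon>) * ennreal (?bm x)"
    proof (cases "x \<in> D")
      case True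
      then have "mx q x \<le> 2 / \<epsilon> * ?bm x" using e by (simp add: D_def field_simps)
      then have "ennreal (mx q x) \<le> ennreal (2 / \<epsilon> * ?bm x)" by (rule ennreal_leI)
      also have "\<dots> = ennreal (2 / \<epsilon>) * ennreal (?bm x)"
        using e bm_nonneg by (intro ennreal_mult) auto
      finally show ?thesis using True by simp
    qed simp
  qed
  also have "\<dots> = ennreal (2 / \<epsilon>) * (\<integral>\<^sup>+ x. ennreal (?bm x) \<partial>count_space UNIV)"
    by (simp add: nn_integral_cmult)
  also have "(\<integral>\<^sup>+ x. ennreal (?bm x) \<partial>count_space UNIV) =
      ennreal \<alpha>1 * (\<integral>\<^sup>+ x. ennreal (measure q1 {z. fst z = x \<and> snd z \<in> ?B1}) \<partial>count_space UNIV)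
    + ennreal \<alpha>2 * (\<integral>\<^sup>+ x. ennreal (measure q2 {z. fst z = x \<and> snd z \<in> ?B2}) \<partial>count_space UNIV)"
    unfolding bm_def using a1 a2
    by (simp add: ennreal_plus ennreal_mult nn_integral_add nn_integral_cmult)
  also have "\<dots> = ennreal \<alpha>1 * emeasure (measure_pmf q1) {z. snd z \<in> ?B1}
                  + ennreal \<alpha>2 * emeasure (measure_pmf q2) {z. snd z \<in> ?B2}"
    by (simp add: int_slice_measure)
  also have "\<dots> \<le> ennreal \<alpha>1 * ennreal (1 / (2 powr c * \<alpha>1)) + ennreal \<alpha>2 * ennreal (1 / (2 powr c * \<alpha>2))"
    by (intro add_mono mult_left_mono)
       (auto simp: measure_pmf.emeasure_eq_measure intro!: ennreal_leI B_small a1 a2)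
  also have "\<dots> = ennreal (2 / 2 powr c)"
    using a1 a2 by (simp add: ennreal_mult[symmetric] ennreal_plus[symmetric])
  finally show ?thesis using e by (simp add: ennreal_mult[symmetric] mult_left_mono)
qed

lemma mass_i:
  fixes qi :: "('x \<times> 'y) pmf"
  assumes ge: "\<And>z. pmf q z \<ge> \<alpha> * pmf qi z" and a: "\<alpha> > 0"
  shows "ennreal \<alpha> * emeasure (measure_pmf qi) S \<le> emeasure (measure_pmf q) S"
proof -
  have "\<alpha> * measure qi S \<le> measure q S"
  proof -
    have "\<alpha> * measure qi S = infsetsum (\<lambda>z. \<alpha> * pmf qi z) S"
      by (simp add: infsetsum_cmult_right[OF pmf_abs_summable] measure_pmf_conv_infsetsum)
    also have "\<dots> \<le> infsetsum (pmf q) S"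
      by (rule infsetsum_mono) (auto intro: ge)
    finally show ?thesis by (simp add: measure_pmf_conv_infsetsum)
  qed
  then have "ennreal (\<alpha> * measure qi S) \<le> ennreal (measure q S)" by (rule ennreal_leI)
  then show ?thesis using a by (simp add: measure_pmf.emeasure_eq_measure ennreal_mult)
qed

end

lemma infsum_nn:
  fixes g :: "'a::countable \<Rightarrow> ennreal"
  shows "infsum g UNIV = (\<integral>\<^sup>+ x. g x \<partial>count_space UNIV)"
proof -
  define A :: "nat \<Rightarrow> 'a set" where "A k = {x. to_nat x < k}" for k
  have finA: "finite (A k)" for k
  proof -
    have "A k = to_nat -` {..<k}" by (auto simp: A_def)
    then show ?thesis by (simp add: finite_vimageI)
  qed
  have inc: "incseq (\<lambda>k x. g x * indicator (A k) x)"
    by (intro monoI le_funI mult_left_mono) (auto simp: A_def indicator_def)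
  have sup: "(SUP k. g x * indicator (A k) x) = g x" for x
  proof (rule antisym)
    show "(SUP k. g x * indicator (A k) x) \<le> g x" by (intro SUP_least) (auto simp: indicator_def)
    have "g x = g x * indicator (A (Suc (to_nat x))) x" by (simp add: A_def)
    also have "\<dots> \<le> (SUP k. g x * indicator (A k) x)" by (rule SUP_upper) simp
    finally show "g x \<le> (SUP k. g x * indicator (A k) x)" .
  qed
  have "(\<integral>\<^sup>+ x. g x \<partial>count_space UNIV) = (\<integral>\<^sup>+ x. (SUP k. g x * indicator (A k) x) \<partial>count_space UNIV)"
    by (simp add: sup)
  also have "\<dots> = (SUP k. \<integral>\<^sup>+ x. g x * indicator (A k) x \<partial>count_space UNIV)"
    by (rule nn_integral_monotone_convergence_SUP[OF inc]) simp
  also have "\<dots> = (SUP k. sum g (A k))"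
    by (simp add: nn_integral_count_space_indicator[symmetric] nn_integral_count_space_finite finA)
  also have "\<dots> = (SUP F\<in>{F. finite F \<and> F \<subseteq> UNIV}. sum g F)"
  proof (rule antisym)
    show "(SUP k. sum g (A k)) \<le> (SUP F\<in>{F. finite F \<and> F \<subseteq> UNIV}. sum g F)"
      by (intro SUP_least SUP_upper2[of "A _"]) (auto simp: finA)
    show "(SUP F\<in>{F. finite F \<and> F \<subseteq> UNIV}. sum g F) \<le> (SUP k. sum g (A k))"
    proof (intro SUP_least)
      fix F :: "'a set" assume "F \<in> {F. finite F \<and> F \<subseteq> UNIV}"
      then have fF: "finite F" by simp
      define k where "k = Suc (Max (insert 0 (to_nat ` F)))"
      have "F \<subseteq> A k"
      proof
        fix x assume "x \<in> F"
        then have "to_nat x \<le> Max (insert 0 (to_nat ` F))" using fF by (intro Max_ge) auto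
        then show "x \<in> A k" by (simp add: A_def k_def)
      qed
      then have "sum g F \<le> sum g (A k)" by (intro sum_mono2 finA) auto
      also have "\<dots> \<le> (SUP k. sum g (A k))" by (rule SUP_upper) simp
      finally show "sum g F \<le> (SUP k. sum g (A k))" .
    qed
  qed
  also have "\<dots> = infsum g UNIV" by (rule nonneg_infsum_complete[symmetric]) simp
  finally show ?thesis ..
qed


lemma UI_bound:
  fixes Q :: "('a, 'b) source"
  assumes n: "n \<ge> 1" and u: "u \<ge> 0"
  shows "(\<integral>\<^sup>+ z. indicator D (fst z) * ennreal (Lf (Q n) (fst z) (snd z)) \<partial>measure_pmf (Q n))
    \<le> of_nat n * ((SUP m\<in>{1..}. \<integral>\<^sup>+ w. (if \<bar>w\<bar> \<ge> u then ennreal \<bar>w\<bar> else 0) \<partial>measure_pmf (map_pmf (Zn Q m) (Q m)))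
        + ennreal u * emeasure (measure_pmf (Q n)) {z. fst z \<in> D})"
proof -
  let ?Z = "Zn Q n"
  have L: "Lf (Q n) (fst z) (snd z) = real n * ?Z z" for z
    using n by (simp add: Zn_Lf)
  have "(\<integral>\<^sup>+ z. indicator D (fst z) * ennreal (Lf (Q n) (fst z) (snd z)) \<partial>measure_pmf (Q n))
      = (\<integral>\<^sup>+ z. of_nat n * (indicator D (fst z) * ennreal (?Z z)) \<partial>measure_pmf (Q n))"
  proof (intro nn_integral_cong)
    fix z
    show "indicator D (fst z) * ennreal (Lf (Q n) (fst z) (snd z)) = of_nat n * (indicator D (fst z) * ennreal (?Z z))"
    proof (cases "?Z z \<ge> 0")
      case True
      then show ?thesis unfolding L by (simp add: ennreal_mult ennreal_of_nat_eq_real_of_nat ac_simps)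
    next
      case False
      then have "real n * ?Z z \<le> 0" using n by (simp add: mult_nonneg_nonpos)
      then show ?thesis unfolding L using False by (simp add: ennreal_neg)
    qed
  qed
  also have "\<dots> = of_nat n * (\<integral>\<^sup>+ z. indicator D (fst z) * ennreal (?Z z) \<partial>measure_pmf (Q n))"
    by (rule nn_integral_cmult) simp
  also have "(\<integral>\<^sup>+ z. indicator D (fst z) * ennreal (?Z z) \<partial>measure_pmf (Q n))
     \<le> (\<integral>\<^sup>+ z. (if \<bar>?Z z\<bar> \<ge> u then ennreal \<bar>?Z z\<bar> else 0) + ennreal u * indicator {z. fst z \<in> D} z \<partial>measure_pmf (Q n))"
  proof (rule nn_integral_mono)
    fix z
    show "indicator D (fst z) * ennreal (?Z z) \<le> (if \<bar>?Z z\<bar> \<ge> u then ennreal \<bar>?Z z\<bar> else 0) + ennreal u * indicator {z. fst z \<in> D} z"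
    proof (cases "fst z \<in> D")
      case False then show ?thesis by simp
    next
      case True
      show ?thesis
      proof (cases "\<bar>?Z z\<bar> \<ge> u")
        case True': True
        have "ennreal (?Z z) \<le> ennreal \<bar>?Z z\<bar>" by (rule ennreal_leI) simp
        then show ?thesis using True True' by (simp add: add_increasing2)
      next
        case False
        then have "?Z z \<le> u" by simp
        then have "ennreal (?Z z) \<le> ennreal u" by (rule ennreal_leI)
        then show ?thesis using True False by simp
      qed
    qed
  qed
  also have "\<dots> = (\<integral>\<^sup>+ z. (if \<bar>?Z z\<bar> \<ge> u then ennreal \<bar>?Z z\<bar> else 0) \<partial>measure_pmf (Q n))
      + ennreal u * emeasure (measure_pmf (Q n)) {z. fst z \<in> D}"
    by (simp add: nn_integral_add nn_integral_cmult_indicator)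
  also have "(\<integral>\<^sup>+ z. (if \<bar>?Z z\<bar> \<ge> u then ennreal \<bar>?Z z\<bar> else 0) \<partial>measure_pmf (Q n))
      = (\<integral>\<^sup>+ w. (if \<bar>w\<bar> \<ge> u then ennreal \<bar>w\<bar> else 0) \<partial>measure_pmf (map_pmf (Zn Q n) (Q n)))"
    by simp
  also have "\<dots> \<le> (SUP m\<in>{1..}. \<integral>\<^sup>+ w. (if \<bar>w\<bar> \<ge> u then ennreal \<bar>w\<bar> else 0) \<partial>measure_pmf (map_pmf (Zn Q m) (Q m)))"
    by (rule SUP_upper) (use n in simp)
  finally show ?thesis by (simp add: mult_left_mono add_right_mono)
qed


definition errf :: "real \<Rightarrow> real \<Rightarrow> real \<Rightarrow> nat \<Rightarrow> real" where
  "errf \<epsilon> \<gamma> u n = (1 + real n * \<gamma> + (8 * real n * u / (\<epsilon> * 2 powr (real n * \<gamma>)) + 2 / ln 2) / \<epsilon>) / real n"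

lemma Hs_int: fixes P :: "('a::countable, 'b::countable) source" shows "Hs_eps \<epsilon> P n = (\<integral>\<^sup>+ x. ennreal (mx (P n) x) * ennreal (hb \<epsilon> (P n) x) \<partial>count_space UNIV)"
  unfolding Hs_eps_def by (subst infsum_nn) (simp add: pX_def mx_def hbar_hb)

lemma Hmax_int: fixes P P1 P2 :: "('a::countable, 'b::countable) source" shows "Hmax_eps \<epsilon> P P1 P2 n =
   (\<integral>\<^sup>+ x. ennreal (mx (P n) x) * ennreal (max (hb \<epsilon> (P1 n) x) (hb \<epsilon> (P2 n) x)) \<partial>count_space UNIV)"
  unfolding Hmax_eps_def by (subst infsum_nn) (simp add: pX_def mx_def hbar_hb)

lemma pos_marg:
  fixes P P1 P2 :: "('a::countable, 'b::countable) source"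
  assumes s1: "is_source P1" and s2: "is_source P2"
    and mixP: "\<And>n xy. pmf (P n) xy = \<alpha>1 * pmf (P1 n) xy + \<alpha>2 * pmf (P2 n) xy"
    and m: "mx (P n) x > 0"
  shows "mx (P1 n) x > 0 \<and> mx (P2 n) x > 0"
proof -
  have "x \<in> set_pmf (map_pmf fst (P n))" using m by (simp add: mx_def pmf_positive_iff)
  then obtain z where z: "z \<in> set_pmf (P n)" "fst z = x" by auto
  have "pmf (P n) z > 0" using z by (simp add: pmf_positive)
  then have "\<not> (pmf (P1 n) z = 0 \<and> pmf (P2 n) z = 0)" unfolding mixP by auto
  then have "pmf (P1 n) z > 0 \<or> pmf (P2 n) z > 0"
    using pmf_nonneg[of "P1 n" z] pmf_nonneg[of "P2 n" z] by linarith
  then have "z \<in> set_pmf (P1 n) \<or> z \<in> set_pmf (P2 n)" by (auto simp: pmf_positive_iff)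
  moreover have "set_pmf (P1 n) \<subseteq> {(x, y). length x = n \<and> length y = n}"
    using s1 unfolding is_source_def by (elim conjE allE)
  moreover have "set_pmf (P2 n) \<subseteq> {(x, y). length x = n \<and> length y = n}"
    using s2 unfolding is_source_def by (elim conjE allE)
  ultimately have "z \<in> {(x, y). length x = n \<and> length y = n}" by (meson subsetD)
  then have "length (fst z) = n" by (auto simp: mem_Times_iff)
  then have "length x = n" using z(2) by simp
  moreover have h1: "\<And>x. 0 < pmf (map_pmf fst (P1 (length x))) x" using s1 by (simp add: is_source_def)
  moreover have h2: "\<And>x. 0 < pmf (map_pmf fst (P2 (length x))) x" using s2 by (simp add: is_source_def)
  ultimately show ?thesis unfolding mx_def by metis
qed

lemma per_n:
  fixes P P1 P2 :: "('a::countable, 'b::countable) source" and \<alpha>1 \<alpha>2 :: real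
  assumes s1: "is_source P1" and s2: "is_source P2"
    and a1: "\<alpha>1 > 0" and a2: "\<alpha>2 > 0" and a12: "\<alpha>1 + \<alpha>2 = 1"
    and mixP: "\<And>n xy. pmf (P n) xy = \<alpha>1 * pmf (P1 n) xy + \<alpha>2 * pmf (P2 n) xy"
    and n: "n \<ge> 1" and e: "0 < \<epsilon>" "\<epsilon> < 1" and g: "\<gamma> > 0" and u: "u \<ge> 0"
  defines "U1 \<equiv> (SUP m\<in>{1..}. \<integral>\<^sup>+ w. (if \<bar>w\<bar> \<ge> u then ennreal \<bar>w\<bar> else 0) \<partial>measure_pmf (map_pmf (Zn P1 m) (P1 m)))"
    and "U2 \<equiv> (SUP m\<in>{1..}. \<integral>\<^sup>+ w. (if \<bar>w\<bar> \<ge> u then ennreal \<bar>w\<bar> else 0) \<partial>measure_pmf (map_pmf (Zn P2 m) (P2 m)))"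
  shows "Hs_eps \<epsilon> P n / of_nat n \<le> Hmax_eps (\<epsilon>/2) P P1 P2 n / of_nat n
      + (ennreal \<alpha>1 * U1 + ennreal \<alpha>2 * U2) / ennreal \<epsilon> + ennreal (errf \<epsilon> \<gamma> u n)"
proof -
  interpret mix "P n" "P1 n" "P2 n" \<alpha>1 \<alpha>2 by unfold_locales (rule a1 a2 a12 mixP)+
  define c where "c = real n * \<gamma>"
  have c0: "c \<ge> 0" using g by (simp add: c_def)
  define D where "D = {x. mx (P n) x > 0 \<and> bm (P n) (P1 n) (P2 n) \<alpha>1 \<alpha>2 c x > \<epsilon>/2 * mx (P n) x}"
  define J where "J = (\<integral>\<^sup>+ z. indicator D (fst z) * ennreal (Lf (P n) (fst z) (snd z)) \<partial>measure_pmf (P n))"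
  define I1 where "I1 = (\<integral>\<^sup>+ z. indicator D (fst z) * ennreal (Lf (P1 n) (fst z) (snd z)) \<partial>measure_pmf (P1 n))"
  define I2 where "I2 = (\<integral>\<^sup>+ z. indicator D (fst z) * ennreal (Lf (P2 n) (fst z) (snd z)) \<partial>measure_pmf (P2 n))"
  define W where "W = emeasure (measure_pmf (P n)) {z. fst z \<in> D}"
  define M1 where "M1 = emeasure (measure_pmf (P1 n)) {z. fst z \<in> D}"
  define M2 where "M2 = emeasure (measure_pmf (P2 n)) {z. fst z \<in> D}"
  define X where "X = ennreal \<alpha>1 * U1 + ennreal \<alpha>2 * U2"
  define R where "R = 8 * real n * u / (\<epsilon> * 2 powr c) + 2 / ln 2"
  have pos: "\<And>x. mx (P n) x > 0 \<Longrightarrow> mx (P1 n) x > 0 \<and> mx (P2 n) x > 0"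
    by (rule pos_marg[OF s1 s2 mixP])
  have st1: "Hs_eps \<epsilon> P n \<le> Hmax_eps (\<epsilon>/2) P P1 P2 n + ennreal (1 + c) + J / ennreal \<epsilon>"
    unfolding Hs_int Hmax_int J_def D_def by (rule I1[OF e c0 pos])
  have st2: "J \<le> ennreal \<alpha>1 * I1 + ennreal \<alpha>2 * I2 + ennreal (2 / ln 2)"
    unfolding J_def I1_def I2_def by (rule I2)
  have st3a: "I1 \<le> of_nat n * (U1 + ennreal u * M1)"
    unfolding I1_def U1_def M1_def by (rule UI_bound[OF n u])
  have st3b: "I2 \<le> of_nat n * (U2 + ennreal u * M2)"
    unfolding I2_def U2_def M2_def by (rule UI_bound[OF n u])
  have st4a: "ennreal \<alpha>1 * M1 \<le> W" unfolding M1_def W_def by (rule mass_i[OF q_ge1 a1])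
  have st4b: "ennreal \<alpha>2 * M2 \<le> W" unfolding M2_def W_def by (rule mass_i[OF q_ge2 a2])
  have st5: "W \<le> ennreal (2 / \<epsilon> * (2 / 2 powr c))" unfolding W_def D_def by (rule I3[OF e(1)])
  have b1: "ennreal \<alpha>1 * I1 \<le> of_nat n * (ennreal \<alpha>1 * U1) + of_nat n * ennreal u * W"
  proof -
    have "ennreal \<alpha>1 * I1 \<le> ennreal \<alpha>1 * (of_nat n * (U1 + ennreal u * M1))"
      by (rule mult_left_mono[OF st3a]) simp
    also have "\<dots> = of_nat n * (ennreal \<alpha>1 * U1) + of_nat n * ennreal u * (ennreal \<alpha>1 * M1)"
      by (simp add: algebra_simps)
    also have "\<dots> \<le> of_nat n * (ennreal \<alpha>1 * U1) + of_nat n * ennreal u * W"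
      by (intro add_left_mono mult_left_mono st4a) simp
    finally show ?thesis .
  qed
  have b2: "ennreal \<alpha>2 * I2 \<le> of_nat n * (ennreal \<alpha>2 * U2) + of_nat n * ennreal u * W"
  proof -
    have "ennreal \<alpha>2 * I2 \<le> ennreal \<alpha>2 * (of_nat n * (U2 + ennreal u * M2))"
      by (rule mult_left_mono[OF st3b]) simp
    also have "\<dots> = of_nat n * (ennreal \<alpha>2 * U2) + of_nat n * ennreal u * (ennreal \<alpha>2 * M2)"
      by (simp add: algebra_simps)
    also have "\<dots> \<le> of_nat n * (ennreal \<alpha>2 * U2) + of_nat n * ennreal u * W"
      by (intro add_left_mono mult_left_mono st4b) simp
    finally show ?thesis .
  qed
  have wb: "2 * (of_nat n * ennreal u * W) \<le> ennreal (8 * real n * u / (\<epsilon> * 2 powr c))"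
  proof -
    define K where "K = 2 / \<epsilon> * (2 / 2 powr c)"
    have K: "K \<ge> 0" using e by (simp add: K_def)
    have "2 * (of_nat n * ennreal u * W) \<le> 2 * (of_nat n * ennreal u * ennreal K)"
      using st5 unfolding K_def[symmetric] by (intro mult_left_mono) simp_all
    also have "\<dots> = ennreal (2 * (real n * u * K))"
      using K u by (simp add: ennreal_mult ennreal_of_nat_eq_real_of_nat)
    also have "2 * (real n * u * K) = 8 * real n * u / (\<epsilon> * 2 powr c)"
      unfolding K_def by (simp add: field_simps)
    finally show ?thesis .
  qed
  have jb: "J \<le> of_nat n * X + ennreal R"
  proof -
    have "J \<le> of_nat n * (ennreal \<alpha>1 * U1) + of_nat n * ennreal u * W +
        (of_nat n * (ennreal \<alpha>2 * U2) + of_nat n * ennreal u * W) + ennreal (2 / ln 2)"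
      using order.trans[OF st2 add_mono[OF add_mono[OF b1 b2] order.refl]] .
    also have "\<dots> = of_nat n * X + 2 * (of_nat n * ennreal u * W) + ennreal (2 / ln 2)"
      by (simp only: X_def distrib_left mult_2 add_ac)
    also have "\<dots> \<le> of_nat n * X + ennreal (8 * real n * u / (\<epsilon> * 2 powr c)) + ennreal (2 / ln 2)"
      by (intro add_mono wb order.refl)
    also have "\<dots> = of_nat n * X + ennreal R"
    proof -
      have "ennreal (8 * real n * u / (\<epsilon> * 2 powr c)) + ennreal (2 / ln 2) = ennreal R"
        unfolding R_def by (rule ennreal_plus[symmetric]) (use e u in simp_all)
      then show ?thesis by (simp only: add.assoc)
    qed
    finally show ?thesis .
  qed
  have "Hs_eps \<epsilon> P n \<le> Hmax_eps (\<epsilon>/2) P P1 P2 n + ennreal (1 + c) + (of_nat n * X + ennreal R) / ennreal \<epsilon>"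
  proof -
    have "J / ennreal \<epsilon> \<le> (of_nat n * X + ennreal R) / ennreal \<epsilon>"
      by (rule divide_right_mono_ennreal[OF jb])
    then have "Hmax_eps (\<epsilon>/2) P P1 P2 n + ennreal (1 + c) + J / ennreal \<epsilon> \<le>
       Hmax_eps (\<epsilon>/2) P P1 P2 n + ennreal (1 + c) + (of_nat n * X + ennreal R) / ennreal \<epsilon>"
      by (rule add_left_mono)
    with st1 show ?thesis by (rule order.trans)
  qed
  also have "\<dots> = Hmax_eps (\<epsilon>/2) P P1 P2 n + of_nat n * (X / ennreal \<epsilon>) + ennreal (1 + c + R / \<epsilon>)"
  proof -
    have R0: "R \<ge> 0" unfolding R_def using e u by simp
    have "(of_nat n * X + ennreal R) / ennreal \<epsilon> = of_nat n * (X / ennreal \<epsilon>) + ennreal (R / \<epsilon>)"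
      using e R0 by (simp add: add_divide_distrib_ennreal ennreal_times_divide divide_ennreal)
    moreover have "ennreal (1 + c) + ennreal (R / \<epsilon>) = ennreal (1 + c + R / \<epsilon>)"
      using c0 R0 e by (simp add: ennreal_plus)
    ultimately show ?thesis by (simp add: ac_simps)
  qed
  finally have main: "Hs_eps \<epsilon> P n \<le> Hmax_eps (\<epsilon>/2) P P1 P2 n + of_nat n * (X / ennreal \<epsilon>) + ennreal (1 + c + R / \<epsilon>)" .
  have nz: "(of_nat n :: ennreal) \<noteq> 0" "(of_nat n :: ennreal) \<noteq> \<top>" using n by auto
  have "Hs_eps \<epsilon> P n / of_nat n \<le> (Hmax_eps (\<epsilon>/2) P P1 P2 n + of_nat n * (X / ennreal \<epsilon>) + ennreal (1 + c + R / \<epsilon>)) / of_nat n"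
    by (rule divide_right_mono_ennreal[OF main])
  also have "\<dots> = Hmax_eps (\<epsilon>/2) P P1 P2 n / of_nat n + X / ennreal \<epsilon> + ennreal (1 + c + R / \<epsilon>) / of_nat n"
    using nz by (simp add: add_divide_distrib_ennreal mult.commute[of "of_nat n"] mult_divide_eq_ennreal)
  also have "ennreal (1 + c + R / \<epsilon>) / of_nat n = ennreal (errf \<epsilon> \<gamma> u n)"
  proof -
    have R0: "R \<ge> 0" unfolding R_def using e u by simp
    have r0: "1 + c + R / \<epsilon> \<ge> 0" using c0 R0 e by simp
    have "ennreal (1 + c + R / \<epsilon>) / of_nat n = ennreal ((1 + c + R / \<epsilon>) / real n)"
      unfolding ennreal_of_nat_eq_real_of_nat by (rule divide_ennreal[OF r0]) (use n in simp)
    then show ?thesis by (simp add: errf_def R_def c_def)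
  qed
  finally show ?thesis by (simp add: X_def)
qed


lemma errf_lim:
  assumes th: "\<theta> > 0" and e: "\<epsilon> > 0"
  shows "(\<lambda>n. errf \<epsilon> \<theta> u n) \<longlonglongrightarrow> \<theta>"
proof -
  define b where "b = 2 powr \<theta>"
  have b1: "b > 1" unfolding b_def using th by simp
  have pw: "2 powr (real n * \<theta>) = b ^ n" for n
  proof -
    have "2 powr (real n * \<theta>) = (2 powr \<theta>) powr real n" by (simp add: powr_powr mult.commute)
    also have "\<dots> = b ^ n" unfolding b_def by (rule powr_realpow) simp
    finally show ?thesis .
  qed
  have eq: "errf \<epsilon> \<theta> u n = (1 + 2 / (ln 2 * \<epsilon>)) / of_nat n + \<theta> + (8 * u / (\<epsilon> * \<epsilon>)) * inverse (b ^ n)"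
    if "n \<ge> 1" for n
  proof -
    have "errf \<epsilon> \<theta> u n = (1 + real n * \<theta> + (8 * real n * u / (\<epsilon> * b ^ n) + 2 / ln 2) / \<epsilon>) / real n"
      by (simp add: errf_def pw)
    also have "\<dots> = (1 + 2 / (ln 2 * \<epsilon>)) / of_nat n + \<theta> + (8 * u / (\<epsilon> * \<epsilon>)) * inverse (b ^ n)"
      using that e b1 by (simp add: field_simps)
    finally show ?thesis .
  qed
  have "(\<lambda>n. (1 + 2 / (ln 2 * \<epsilon>)) / of_nat n + \<theta> + (8 * u / (\<epsilon> * \<epsilon>)) * inverse (b ^ n))
      \<longlonglongrightarrow> 0 + \<theta> + (8 * u / (\<epsilon> * \<epsilon>)) * 0"
    by (intro tendsto_add tendsto_mult tendsto_const lim_const_over_n LIMSEQ_inverse_realpow_zero b1)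
  then have "(\<lambda>n. (1 + 2 / (ln 2 * \<epsilon>)) / of_nat n + \<theta> + (8 * u / (\<epsilon> * \<epsilon>)) * inverse (b ^ n)) \<longlonglongrightarrow> \<theta>"
    by simp
  then show ?thesis
    by (rule Lim_transform_eventually) (auto simp: eventually_sequentially eq intro!: exI[of _ 1])
qed

lemma antitone_lim:
  fixes h :: "real \<Rightarrow> ennreal"
  assumes anti: "\<And>a b. 0 < a \<Longrightarrow> a \<le> b \<Longrightarrow> b < 1 \<Longrightarrow> h b \<le> h a"
  shows "(h \<longlongrightarrow> (SUP e\<in>{0<..<1}. h e)) (at_right 0)"
proof (rule order_tendstoI)
  fix a assume "a < (SUP e\<in>{0<..<1}. h e)"
  then obtain e0 where e0: "e0 \<in> {0<..<1}" "a < h e0" by (auto simp: less_SUP_iff)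
  have e00: "(0::real) < 1" by simp
  show "eventually (\<lambda>x. a < h x) (at_right 0)"
    unfolding eventually_at_right[OF e00]
  proof (intro exI conjI allI impI)
    show "e0 > 0" using e0 by simp
    fix y :: real assume y: "0 < y" "y < e0"
    have "h e0 \<le> h y" using e0 y by (intro anti) auto
    then show "a < h y" using e0 by simp
  qed
next
  fix a assume a: "(SUP e\<in>{0<..<1}. h e) < a"
  have "eventually (\<lambda>x::real. x \<in> {0<..<1}) (at_right 0)"
    unfolding eventually_at_right[OF zero_less_one] by (intro exI[of _ 1]) auto
  then show "eventually (\<lambda>x. h x < a) (at_right 0)"
  proof (rule eventually_mono)
    fix x :: real assume "x \<in> {0<..<1}"
    then have "h x \<le> (SUP e\<in>{0<..<1}. h e)" by (rule SUP_upper)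
    then show "h x < a" using a by simp
  qed
qed


lemma Hs_anti:
  fixes P :: "('a::countable, 'b::countable) source"
  assumes "0 < a" "a \<le> b" "b < 1"
  shows "Hs_eps b P n \<le> Hs_eps a P n"
  unfolding Hs_int
proof (rule nn_integral_mono)
  fix x
  show "ennreal (mx (P n) x) * ennreal (hb b (P n) x) \<le> ennreal (mx (P n) x) * ennreal (hb a (P n) x)"
  proof (cases "mx (P n) x > 0")
    case True
    then show ?thesis by (intro mult_left_mono ennreal_leI hb_anti) (use assms in auto)
  next
    case False
    then have "mx (P n) x = 0" using pmf_nonneg[of _ x] by (simp add: mx_def not_less order.antisym)
    then show ?thesis by simp
  qed
qed

lemma Hm_anti:
  fixes P P1 P2 :: "('a::countable, 'b::countable) source"
  assumes s1: "is_source P1" and s2: "is_source P2"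
    and mixP: "\<And>n xy. pmf (P n) xy = \<alpha>1 * pmf (P1 n) xy + \<alpha>2 * pmf (P2 n) xy"
    and ab: "0 < a" "a \<le> b" "b < 1"
  shows "Hmax_eps b P P1 P2 n \<le> Hmax_eps a P P1 P2 n"
  unfolding Hmax_int
proof (rule nn_integral_mono)
  fix x
  show "ennreal (mx (P n) x) * ennreal (max (hb b (P1 n) x) (hb b (P2 n) x))
     \<le> ennreal (mx (P n) x) * ennreal (max (hb a (P1 n) x) (hb a (P2 n) x))"
  proof (cases "mx (P n) x > 0")
    case True
    note p = pos_marg[OF s1 s2 mixP True]
    have "hb b (P1 n) x \<le> hb a (P1 n) x" by (rule hb_anti) (use p ab in auto)
    moreover have "hb b (P2 n) x \<le> hb a (P2 n) x" by (rule hb_anti) (use p ab in auto)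
    ultimately have "max (hb b (P1 n) x) (hb b (P2 n) x) \<le> max (hb a (P1 n) x) (hb a (P2 n) x)"
      by (rule max.mono)
    then show ?thesis by (intro mult_left_mono ennreal_leI) auto
  next
    case False
    then have "mx (P n) x = 0" using pmf_nonneg[of _ x] by (simp add: mx_def not_less order.antisym)
    then show ?thesis by simp
  qed
qed

theorem theorem12:
  fixes P P1 P2 :: "('a::countable, 'b::countable) source"
    and \<alpha>1 \<alpha>2 :: real
  assumes "is_source P1" and "is_source P2"
    and "unif_integrable P1" and "unif_integrable P2"
    and "\<alpha>1 > 0" and "\<alpha>2 > 0" and "\<alpha>1 + \<alpha>2 = 1"
    and "\<And>n xy. pmf (P n) xy = \<alpha>1 * pmf (P1 n) xy + \<alpha>2 * pmf (P2 n) xy"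
  shows "Hs_bar P \<le>
    Lim (at_right 0) (\<lambda>\<epsilon>::real. limsup (\<lambda>n. Hmax_eps \<epsilon> P P1 P2 n / of_nat n))"
proof -
  note s1 = assms(1) and s2 = assms(2) and ui1 = assms(3) and ui2 = assms(4)
    and a1 = assms(5) and a2 = assms(6) and a12 = assms(7) and mixP = assms(8)
  define f where "f = (\<lambda>\<epsilon>::real. limsup (\<lambda>n. Hs_eps \<epsilon> P n / of_nat n))"
  define g where "g = (\<lambda>\<epsilon>::real. limsup (\<lambda>n. Hmax_eps \<epsilon> P P1 P2 n / of_nat n))"
  have f_anti: "f b \<le> f a" if "0 < a" "a \<le> b" "b < 1" for a b
    unfolding f_def by (intro Limsup_mono always_eventually allI divide_right_mono_ennreal Hs_anti that)
  have g_anti: "g b \<le> g a" if "0 < a" "a \<le> b" "b < 1" for a b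
    unfolding g_def by (intro Limsup_mono always_eventually allI divide_right_mono_ennreal Hm_anti[OF s1 s2 mixP] that)
  have fL: "Lim (at_right 0) f = (SUP e\<in>{0<..<1}. f e)"
    by (rule tendsto_Lim[OF trivial_limit_at_right_real antitone_lim]) (rule f_anti)
  have gL: "Lim (at_right 0) g = (SUP e\<in>{0<..<1}. g e)"
    by (rule tendsto_Lim[OF trivial_limit_at_right_real antitone_lim]) (rule g_anti)
  have key: "f \<epsilon> \<le> g (\<epsilon>/2)" if e: "0 < \<epsilon>" "\<epsilon> < 1" for \<epsilon>
  proof (rule ennreal_le_epsilon)
    fix \<theta> :: real assume th: "0 < \<theta>"
    define t where "t = \<theta> / 3"
    have t0: "t > 0" using th by (simp add: t_def)
    define U :: "('a, 'b) source \<Rightarrow> real \<Rightarrow> ennreal" where "U = (\<lambda>Q u. (SUP m\<in>{1::nat..}. \<integral>\<^sup>+ w. (if \<bar>w\<bar> \<ge> u then ennreal \<bar>w\<bar> else 0) \<partial>measure_pmf (map_pmf (Zn Q m) (Q m))))"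
    have tl1: "(U P1 \<longlongrightarrow> 0) at_top" using ui1 unfolding unif_integrable_def U_def by simp
    have tl2: "(U P2 \<longlongrightarrow> 0) at_top" using ui2 unfolding unif_integrable_def U_def by simp
    have te: "0 < ennreal (t * \<epsilon>)" using t0 e by simp
    have "eventually (\<lambda>u. U P1 u < ennreal (t * \<epsilon>) \<and> U P2 u < ennreal (t * \<epsilon>)) at_top"
      by (intro eventually_conj order_tendstoD(2)[OF tl1 te] order_tendstoD(2)[OF tl2 te])
    then obtain u0 where u0: "\<And>u. u \<ge> u0 \<Longrightarrow> U P1 u < ennreal (t * \<epsilon>) \<and> U P2 u < ennreal (t * \<epsilon>)"
      by (auto simp: eventually_at_top_linorder)
    define u where "u = max u0 0"
    have u: "u \<ge> 0" "u \<ge> u0" by (auto simp: u_def)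
    have U1: "U P1 u \<le> ennreal (t * \<epsilon>)" and U2: "U P2 u \<le> ennreal (t * \<epsilon>)"
      using u0[OF u(2)] by auto
    have Xb: "(ennreal \<alpha>1 * U P1 u + ennreal \<alpha>2 * U P2 u) / ennreal \<epsilon> \<le> ennreal t"
    proof -
      have "ennreal \<alpha>1 * U P1 u + ennreal \<alpha>2 * U P2 u \<le> ennreal \<alpha>1 * ennreal (t * \<epsilon>) + ennreal \<alpha>2 * ennreal (t * \<epsilon>)"
        by (intro add_mono mult_left_mono U1 U2) auto
      also have "\<dots> = ennreal (t * \<epsilon>)"
        using a1 a2 t0 e by (simp add: ennreal_mult[symmetric] ennreal_plus[symmetric] distrib_right[symmetric] a12)
      finally have "ennreal \<alpha>1 * U P1 u + ennreal \<alpha>2 * U P2 u \<le> ennreal (t * \<epsilon>)" .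
      then have "(ennreal \<alpha>1 * U P1 u + ennreal \<alpha>2 * U P2 u) / ennreal \<epsilon> \<le> ennreal (t * \<epsilon>) / ennreal \<epsilon>"
        by (rule divide_right_mono_ennreal)
      also have "\<dots> = ennreal t" using t0 e by (simp add: divide_ennreal)
      finally show ?thesis .
    qed
    have ev_err: "eventually (\<lambda>n. errf \<epsilon> t u n < 2 * t) sequentially"
      by (rule order_tendstoD(2)[OF errf_lim[OF t0 e(1)]]) (use t0 in simp)
    have ev: "eventually (\<lambda>n. Hs_eps \<epsilon> P n / of_nat n \<le> ennreal \<theta> + Hmax_eps (\<epsilon>/2) P P1 P2 n / of_nat n) sequentially"
      using ev_err eventually_ge_at_top[of "1::nat"]
    proof (eventually_elim)
      case (elim n)
      have "Hs_eps \<epsilon> P n / of_nat n \<le> Hmax_eps (\<epsilon>/2) P P1 P2 n / of_nat n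
          + (ennreal \<alpha>1 * U P1 u + ennreal \<alpha>2 * U P2 u) / ennreal \<epsilon> + ennreal (errf \<epsilon> t u n)"
        unfolding U_def by (rule per_n[OF s1 s2 a1 a2 a12 mixP elim(2) e t0 u(1)])
      also have "\<dots> \<le> Hmax_eps (\<epsilon>/2) P P1 P2 n / of_nat n + ennreal t + ennreal (2 * t)"
        by (intro add_mono order.refl Xb ennreal_leI) (use elim in simp)
      also have "\<dots> = ennreal \<theta> + Hmax_eps (\<epsilon>/2) P P1 P2 n / of_nat n"
        using t0 by (simp add: ennreal_plus[symmetric] t_def add.commute add.left_commute)
      finally show ?case .
    qed
    have "f \<epsilon> \<le> limsup (\<lambda>n. ennreal \<theta> + Hmax_eps (\<epsilon>/2) P P1 P2 n / of_nat n)"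
      unfolding f_def by (rule Limsup_mono[OF ev])
    also have "\<dots> = ennreal \<theta> + g (\<epsilon>/2)" unfolding g_def by (rule Limsup_const_add) simp
    finally show "f \<epsilon> \<le> g (\<epsilon>/2) + ennreal \<theta>" by (simp add: add.commute)
  qed
  have "(SUP e\<in>{0<..<1}. f e) \<le> (SUP e\<in>{0<..<1}. g e)"
  proof (rule SUP_least)
    fix e :: real assume "e \<in> {0<..<1}"
    then have e: "0 < e" "e < 1" by auto
    have "f e \<le> g (e/2)" by (rule key[OF e])
    also have "\<dots> \<le> (SUP e\<in>{0<..<1}. g e)" by (rule SUP_upper) (use e in simp)
    finally show "f e \<le> (SUP e\<in>{0<..<1}. g e)" .
  qed
  then show ?thesis unfolding Hs_bar_def f_def[symmetric] g_def[symmetric] fL gL .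
qed

end
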